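(* For every integer $m\ge2$, \[ \int\cdots\int_{V_m}\frac{dx_1\cdots dx_m}{x_1\cdots x_m}=(m-1)!\,\zeta(m). \]
   Context: $V_m:=\{(x_1,\dots,x_m)\in[0,1]^m : x_1+x_j\ge1 \text{ for } j=2,\dots,m\}$; $\zeta$ is the Riemann zeta function. *)

theory Defs
  imports "HOL-Analysis.Analysis"
begin

definition zeta :: "nat \<Rightarrow> real" where
  "zeta s = (\<Sum>n. 1 / real (Suc n) ^ s)"

text \<open>V_m as a subset of [0,1]^m, points indexed by {1..m} (extensional functions).\<close>
definition V :: "nat \<Rightarrow> (nat \<Rightarrow> real) set" where
  "V m = {x \<in> {1..m} \<rightarrow>\<^sub>E {0..1}. \<forall>j\<in>{2..m}. x 1 + x j \<ge> 1}"

end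

theory Submission
  imports Defs
begin

lemma lim0:
  fixes c j :: nat assumes "c \<ge> 1"
  shows "((\<lambda>u::real. u^c * (-ln u)^j) \<longlongrightarrow> 0) (at_right 0)"
proof -
  have L: "filterlim (\<lambda>u::real. -ln u) at_top (at_right 0)"
    using ln_at_0 filterlim_uminus_at_top by (simp add: filterlim_uminus_at_bot)
  have "((\<lambda>s. s^j / exp s) \<longlongrightarrow> (0::real)) at_top" by (rule tendsto_power_div_exp_0)
  from filterlim_compose[OF this L]
  have *: "((\<lambda>u. (-ln u)^j / exp (-ln u)) \<longlongrightarrow> (0::real)) (at_right 0)" .
  have pos: "\<forall>\<^sub>F u in at_right (0::real). 0 < u \<and> u < 1"
    unfolding eventually_at_right_field by (auto intro: exI[of _ 1])
  have **: "((\<lambda>u::real. u * (-ln u)^j) \<longlongrightarrow> 0) (at_right 0)"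
  proof (rule Lim_transform_eventually[OF *])
    show "\<forall>\<^sub>F x in at_right (0::real). (- ln x) ^ j / exp (- ln x) = x * (- ln x) ^ j"
      by (rule eventually_mono[OF pos]) (simp add: exp_minus field_simps)
  qed
  show ?thesis
  proof (rule tendsto_sandwich[OF _ _ tendsto_const **])
    from pos show "\<forall>\<^sub>F u in at_right (0::real). 0 \<le> u^c * (-ln u)^j"
      by eventually_elim simp
    from \<open>\<forall>\<^sub>F u in at_right (0::real). 0 < u \<and> u < 1\<close>
    show "\<forall>\<^sub>F u in at_right (0::real). u^c * (-ln u)^j \<le> u * (-ln u)^j"
    proof eventually_elim
      case (elim u)
      have "u^c \<le> u^1" using elim assms by (intro power_decreasing) auto
      then show ?case using elim by (intro mult_right_mono) auto
    qed
  qed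
qed

fun Fa :: "nat \<Rightarrow> nat \<Rightarrow> real \<Rightarrow> real" where
  "Fa k 0 u = u^(k+1)/real (k+1)"
| "Fa k (Suc n) u = u^(k+1) * (-ln u)^(Suc n)/real (k+1) + real (Suc n)/real (k+1) * Fa k n u"

lemma dpow: "((\<lambda>u::real. u^(k+1)) has_real_derivative real (k+1) * u^k) (at u)"
  using DERIV_pow[of "k+1" u] by simp

lemma Fa_deriv: "u > 0 \<Longrightarrow> (Fa k n has_real_derivative u^k * (-ln u)^n) (at u)"
proof (induction n)
  case 0
  have "((\<lambda>u. u^(k+1) / real (k+1)) has_real_derivative real (k+1) * u^k / real (k+1)) (at u)"
    by (rule DERIV_cdivide[OF dpow])
  moreover have "Fa k 0 = (\<lambda>u. u^(k+1) / real (k+1))" by (rule ext) simp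
  ultimately show ?case by simp
next
  case (Suc n)
  have d2: "((\<lambda>u. (-ln u)^(Suc n)) has_real_derivative real (Suc n) * (-ln u)^n * (-(1/u))) (at u)"
  proof -
    have "((\<lambda>u. -ln u) has_real_derivative -(1/u)) (at u)"
      using Suc.prems by (auto intro!: derivative_eq_intros simp: field_simps)
    from DERIV_power[OF this, of "Suc n"] show ?thesis by simp
  qed
  have d: "((\<lambda>u. u^(k+1) * (-ln u)^(Suc n)/real (k+1)) has_real_derivative
      (real (k+1) * u^k * (-ln u)^(Suc n) + real (Suc n) * (-ln u)^n * (-(1/u)) * u^(k+1)) / real (k+1)) (at u)"
    by (rule DERIV_cdivide[OF DERIV_mult[OF dpow d2]])
  have eq: "(real (k+1) * u^k * (-ln u)^(Suc n) + real (Suc n) * (-ln u)^n * (-(1/u)) * u^(k+1)) / real (k+1)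
     = u^k * (-ln u)^(Suc n) - real (Suc n)/real (k+1) * (u^k * (-ln u)^n)"
    using Suc.prems by (simp del: of_nat_Suc of_nat_add add: field_simps power_Suc)
  have "Fa k (Suc n) = (\<lambda>u. u^(k+1) * (-ln u)^(Suc n)/real (k+1) + real (Suc n)/real (k+1) * Fa k n u)"
    by (rule ext) simp
  moreover from DERIV_add[OF d[unfolded eq] DERIV_cmult[OF Suc.IH[OF Suc.prems], of "real (Suc n)/real (k+1)"]]
  have "((\<lambda>u. u^(k+1) * (-ln u)^(Suc n)/real (k+1) + real (Suc n)/real (k+1) * Fa k n u) has_real_derivative u^k * (-ln u)^(Suc n)) (at u)"
    by (simp add: algebra_simps)
  ultimately show ?case by simp
qed

lemma Fa_lim0: "(Fa k n \<longlongrightarrow> 0) (at_right 0)"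
proof (induction n)
  case 0
  have "((\<lambda>u::real. u^(k+1) * (-ln u)^0) \<longlongrightarrow> 0) (at_right 0)" by (rule lim0) simp
  then have "((\<lambda>u::real. u^(k+1) / real (k+1)) \<longlongrightarrow> 0 / real (k+1)) (at_right 0)"
    by (intro tendsto_divide) auto
  then show ?case by simp
next
  case (Suc n)
  have "((\<lambda>u::real. u^(k+1) * (-ln u)^Suc n) \<longlongrightarrow> 0) (at_right 0)" by (rule lim0) simp
  then have "((\<lambda>u::real. u^(k+1) * (-ln u)^Suc n / real (k+1) + real (Suc n)/real (k+1) * Fa k n u) \<longlongrightarrow> 0 / real (k+1) + real (Suc n)/real (k+1) * 0) (at_right 0)"
    by (intro tendsto_add tendsto_divide tendsto_mult Suc.IH tendsto_const) auto
  then show ?case by simp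
qed

lemma Fa_1: "Fa k n 1 = fact n / real (k+1)^(n+1)"
  by (induction n) (auto simp: field_simps)

lemma Jint: "(\<integral>\<^sup>+u. ennreal (u^k * (-ln u)^n) * indicator {0<..<1} u \<partial>lborel) = ennreal (fact n / real (k+1)^(n+1))"
proof -
  let ?f = "\<lambda>u::real. u^k * (-ln u)^n"
  have F: "\<And>x. ereal 0 < ereal x \<Longrightarrow> ereal x < ereal 1 \<Longrightarrow> DERIV (Fa k n) x :> ?f x"
    by (rule Fa_deriv) simp
  have c: "\<And>x. ereal 0 < ereal x \<Longrightarrow> ereal x < ereal 1 \<Longrightarrow> isCont ?f x"
    by (auto intro!: continuous_intros)
  have nn: "AE x in lborel. ereal 0 < ereal x \<longrightarrow> ereal x < ereal 1 \<longrightarrow> 0 \<le> ?f x"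
    by (auto intro!: AE_I2)
  have A: "((Fa k n \<circ> real_of_ereal) \<longlongrightarrow> 0) (at_right (ereal 0))"
    using Fa_lim0[of k n] by (simp add: ereal_tendsto_simps)
  have "isCont (Fa k n) 1" by (rule DERIV_isCont[OF Fa_deriv]) simp
  then have "(Fa k n \<longlongrightarrow> Fa k n 1) (at_left 1)"
    by (simp add: isCont_def filterlim_at_split)
  then have B: "((Fa k n \<circ> real_of_ereal) \<longlongrightarrow> Fa k n 1) (at_left (ereal 1))"
    by (simp add: ereal_tendsto_simps)
  note R = interval_integral_FTC_nonneg[OF _ F c nn A B]
  have int: "integrable lborel (\<lambda>x. indicator {0<..<1} x * ?f x)"
    using R(1) by (simp add: set_integrable_def)
  have val: "(\<integral>x. indicator {0<..<1} x * ?f x \<partial>lborel) = Fa k n 1"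
    using R(2) by (simp add: interval_lebesgue_integral_def set_lebesgue_integral_def)
  have "(\<integral>\<^sup>+u. ennreal (?f u) * indicator {0<..<1} u \<partial>lborel)
      = (\<integral>\<^sup>+u. ennreal (indicator {0<..<1} u * ?f u) \<partial>lborel)"
    by (intro nn_integral_cong) (auto simp: indicator_def)
  also have "\<dots> = ennreal (\<integral>x. indicator {0<..<1} x * ?f x \<partial>lborel)"
    by (intro nn_integral_eq_integral int AE_I2) (auto simp: indicator_def)
  finally show ?thesis using val Fa_1 by simp
qed

lemma zeta_summable: "s \<ge> 2 \<Longrightarrow> summable (\<lambda>k. 1 / real (Suc k) ^ s)"
proof -
  assume "s \<ge> 2"
  from inverse_power_summable[OF this, where 'a=real]
  have "summable (\<lambda>k. inverse (real k ^ s))" .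
  then have "summable (\<lambda>k. inverse (real (Suc k) ^ s))" by (subst summable_Suc_iff)
  then show ?thesis by (simp add: field_simps)
qed

lemma Sint:
  assumes "n \<ge> 1"
  shows "(\<integral>\<^sup>+u. ennreal ((-ln u)^n / (1-u)) * indicator {0<..<1} u \<partial>lborel) = ennreal (fact n * zeta (n+1))"
proof -
  have "(\<integral>\<^sup>+u. ennreal ((-ln u)^n / (1-u)) * indicator {0<..<1} u \<partial>lborel)
     = (\<integral>\<^sup>+u. (\<Sum>k. ennreal (u^k * (-ln u)^n) * indicator {0<..<1} u) \<partial>lborel)"
  proof (intro nn_integral_cong)
    fix u :: real
    show "ennreal ((-ln u)^n / (1-u)) * indicator {0<..<1} u = (\<Sum>k. ennreal (u^k * (-ln u)^n) * indicator {0<..<1} u)"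
    proof (cases "u \<in> {0<..<1}")
      case True
      then have g: "(\<lambda>k. u^k) sums (1/(1-u))" by (intro geometric_sums) auto
      have "(\<lambda>k. u^k * (-ln u)^n) sums (1/(1-u) * (-ln u)^n)"
        by (rule sums_mult2[OF g])
      then have "(\<lambda>k. ennreal (u^k * (-ln u)^n)) sums ennreal (1/(1-u) * (-ln u)^n)"
        using True by (subst sums_ennreal) auto
      then show ?thesis using True by (simp add: sums_iff)
    qed simp
  qed
  also have "\<dots> = (\<Sum>k. \<integral>\<^sup>+u. ennreal (u^k * (-ln u)^n) * indicator {0<..<1} u \<partial>lborel)"
    by (intro nn_integral_suminf) auto
  also have "\<dots> = (\<Sum>k. ennreal (fact n / real (k+1)^(n+1)))"
    by (simp only: Jint)
  also have "\<dots> = ennreal (\<Sum>k. fact n / real (k+1)^(n+1))"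
    using zeta_summable[of "n+1"] assms
    by (intro suminf_ennreal2) (auto dest: summable_mult[of _ "fact n"])
  also have "(\<Sum>k. fact n / real (k+1)^(n+1)) = fact n * zeta (n+1)"
    using zeta_summable[of "n+1"] assms
    by (simp add: zeta_def suminf_mult[symmetric])
  finally show ?thesis .
qed

lemma Tint:
  assumes "n \<ge> 1"
  shows "(\<integral>\<^sup>+t. ennreal ((-ln (1-t))^n / t) * indicator {0<..<1} t \<partial>lborel) = ennreal (fact n * zeta (n+1))"
proof -
  have "(\<integral>\<^sup>+t. ennreal ((-ln (1-t))^n / t) * indicator {0<..<1} t \<partial>lborel)
     = ennreal \<bar>-1::real\<bar> * (\<integral>\<^sup>+x. ennreal ((-ln (1-(1 + (-1)*x)))^n / (1 + (-1)*x)) * indicator {0<..<1} (1 + (-1)*x) \<partial>lborel)"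
    by (rule nn_integral_real_affine[where c="-1" and t=1]) auto
  also have "\<dots> = (\<integral>\<^sup>+u. ennreal ((-ln u)^n / (1-u)) * indicator {0<..<1} u \<partial>lborel)"
    by (auto intro!: nn_integral_cong simp: indicator_def)
  finally show ?thesis using Sint[OF assms] by simp
qed

lemma inner:
  assumes "0 < t" "t < (1::real)"
  shows "(\<integral>\<^sup>+y. indicator {0..1} y * indicator {1..} (t+y) * ennreal (1/y) \<partial>lborel) = ennreal (-ln (1-t))"
proof -
  have "(\<integral>\<^sup>+y. indicator {0..1} y * indicator {1..} (t+y) * ennreal (1/y) \<partial>lborel)
      = (\<integral>\<^sup>+y. ennreal (1/y) * indicator {1-t..1} y \<partial>lborel)"
    using assms by (intro nn_integral_cong) (auto simp: indicator_def)
  also have "\<dots> = ennreal (ln 1 - ln (1-t))"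
  proof (rule nn_integral_FTC_Icc)
    show "(\<lambda>y::real. 1/y) \<in> borel_measurable borel" by measurable
    fix x :: real assume x: "x \<in> {1-t..1}"
    then have "x > 0" using assms by auto
    then show "DERIV ln x :> 1/x" by (auto intro!: derivative_eq_intros)
    show "0 \<le> 1/x" using \<open>x > 0\<close> by simp
  qed (use assms in auto)
  finally show ?thesis by simp
qed

theorem corollary6:
  fixes m :: nat
  assumes "m \<ge> 2"
  shows "(\<integral>\<^sup>+ x. indicator (V m) x * ennreal (1 / (\<Prod>i\<in>{1..m}. x i))
            \<partial>(\<Pi>\<^sub>M i\<in>{1..m}. lborel))
         = ennreal (fact (m - 1) * zeta m)"
proof -
  interpret product_sigma_finite "\<lambda>_. lborel :: real measure" by standard
  define I where "I = {2..m}"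
  have ins: "{1..m} = insert 1 I" using assms by (auto simp: I_def)
  have fin: "finite I" "1 \<notin> I" by (auto simp: I_def)
  have cardI: "card I = m - 1" by (simp add: I_def)
  define h where "h = (\<lambda>t y::real. indicator {0..1} y * indicator {1..} (t+y) * ennreal (1/y))"
  define c where "c = (\<lambda>t::real. indicator {0..1} t * ennreal (1/t))"
  define G where "G = (\<lambda>x::nat\<Rightarrow>real. c (x 1) * (\<Prod>j\<in>I. h (x 1) (x j)))"
  have Gm[measurable]: "G \<in> borel_measurable (\<Pi>\<^sub>M i\<in>insert 1 I. lborel)"
    unfolding G_def c_def h_def using fin by measurable
  have step1: "(\<integral>\<^sup>+ x. indicator (V m) x * ennreal (1 / (\<Prod>i\<in>{1..m}. x i)) \<partial>(\<Pi>\<^sub>M i\<in>{1..m}. lborel))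
      = (\<integral>\<^sup>+ x. G x \<partial>(\<Pi>\<^sub>M i\<in>insert 1 I. lborel))"
    unfolding ins
  proof (rule nn_integral_cong)
    fix x :: "nat \<Rightarrow> real"
    assume "x \<in> space (\<Pi>\<^sub>M i\<in>insert 1 I. lborel)"
    then have ext: "x \<in> extensional (insert 1 I)" by (simp add: space_PiM PiE_def)
    show "indicator (V m) x * ennreal (1 / (\<Prod>i\<in>insert 1 I. x i)) = G x"
    proof (cases "x \<in> V m")
      case True
      then have x01: "\<And>i. i \<in> insert 1 I \<Longrightarrow> x i \<in> {0..1}" and
        xs: "\<And>j. j \<in> I \<Longrightarrow> x 1 + x j \<ge> 1"
        using assms by (auto simp: V_def I_def ins[symmetric] PiE_iff)
      have "G x = ennreal (1 / x 1) * (\<Prod>j\<in>I. ennreal (1 / x j))"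
        unfolding G_def c_def h_def using x01 xs by (auto intro!: prod.cong)
      also have "(\<Prod>j\<in>I. ennreal (1 / x j)) = ennreal (\<Prod>j\<in>I. 1 / x j)"
        using x01 by (intro prod_ennreal) auto
      also have "ennreal (1 / x 1) * \<dots> = ennreal (1 / x 1 * (\<Prod>j\<in>I. 1 / x j))"
        using x01 by (subst ennreal_mult) (auto intro!: prod_nonneg)
      also have "1 / x 1 * (\<Prod>j\<in>I. 1 / x j) = 1 / (\<Prod>i\<in>insert 1 I. x i)"
      proof -
        have "(\<Prod>j\<in>I. 1 / x j) = (\<Prod>j\<in>I. 1) / prod x I" by (rule prod_dividef)
        then show ?thesis using fin by simp
      qed
      finally show ?thesis using True by simp
    next
      case False
      have "\<exists>i\<in>insert 1 I. x i \<notin> {0..1} \<or> (i \<in> I \<and> x 1 + x i < 1)"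
      proof (rule ccontr)
        assume "\<not> ?thesis"
        then have a: "\<forall>i\<in>insert 1 I. x i \<in> {0..1}" and b: "\<forall>j\<in>I. x 1 + x j \<ge> 1"
          by (auto simp: not_less)
        have "x \<in> insert 1 I \<rightarrow>\<^sub>E {0..1}" using a ext by (simp add: PiE_iff)
        then have "x \<in> V m" using b unfolding V_def ins I_def by simp
        with False show False by simp
      qed
      then obtain i where i: "i \<in> insert 1 I" "x i \<notin> {0..1} \<or> (i \<in> I \<and> x 1 + x i < 1)" by blast
      have "G x = 0"
      proof (cases "i = 1")
        case True
        then have "x 1 \<notin> {0..1}" using i fin by auto
        then show ?thesis by (simp add: G_def c_def)
      next
        case False
        then have "i \<in> I" using i by auto
        then have "(\<Prod>j\<in>I. h (x 1) (x j)) = 0"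
          using i fin by (intro prod_zero) (auto simp: h_def intro!: bexI[of _ i])
        then show ?thesis by (simp add: G_def)
      qed
      then show ?thesis using False by simp
    qed
  qed
  also have "\<dots> = (\<integral>\<^sup>+ t. (\<integral>\<^sup>+ x. G (x(1:=t)) \<partial>(\<Pi>\<^sub>M i\<in>I. lborel)) \<partial>lborel)"
    by (rule product_nn_integral_insert_rev[OF fin Gm])
  also have "\<dots> = (\<integral>\<^sup>+ t. c t * (\<integral>\<^sup>+ y. h t y \<partial>lborel) ^ (m-1) \<partial>lborel)"
  proof (rule nn_integral_cong)
    fix t :: real
    have "(\<integral>\<^sup>+ x. G (x(1:=t)) \<partial>(\<Pi>\<^sub>M i\<in>I. lborel)) = (\<integral>\<^sup>+ x. c t * (\<Prod>j\<in>I. h t (x j)) \<partial>(\<Pi>\<^sub>M i\<in>I. lborel))"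
    proof (intro nn_integral_cong)
      fix x :: "nat \<Rightarrow> real"
      have "(\<Prod>j\<in>I. h t ((x(1:=t)) j)) = (\<Prod>j\<in>I. h t (x j))"
        using fin by (intro prod.cong) auto
      then show "G (x(1:=t)) = c t * (\<Prod>j\<in>I. h t (x j))" by (simp add: G_def)
    qed
    also have "\<dots> = c t * (\<integral>\<^sup>+ x. (\<Prod>j\<in>I. h t (x j)) \<partial>(\<Pi>\<^sub>M i\<in>I. lborel))"
      using fin unfolding h_def by (intro nn_integral_cmult) measurable
    also have "(\<integral>\<^sup>+ x. (\<Prod>j\<in>I. h t (x j)) \<partial>(\<Pi>\<^sub>M i\<in>I. lborel)) = (\<Prod>j\<in>I. \<integral>\<^sup>+ y. h t y \<partial>lborel)"
      using fin unfolding h_def by (intro product_nn_integral_prod) auto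
    also have "\<dots> = (\<integral>\<^sup>+ y. h t y \<partial>lborel) ^ (m-1)"
      using cardI by simp
    finally show "(\<integral>\<^sup>+ x. G (x(1:=t)) \<partial>(\<Pi>\<^sub>M i\<in>I. lborel)) = c t * (\<integral>\<^sup>+ y. h t y \<partial>lborel) ^ (m-1)" .
  qed
  also have "\<dots> = (\<integral>\<^sup>+t. ennreal ((-ln (1-t))^(m-1) / t) * indicator {0<..<1} t \<partial>lborel)"
  proof (rule nn_integral_cong_AE)
    show "AE t in lborel. c t * (\<integral>\<^sup>+ y. h t y \<partial>lborel) ^ (m-1) = ennreal ((-ln (1-t))^(m-1) / t) * indicator {0<..<1} t"
      using AE_lborel_singleton[of "1::real"]
    proof eventually_elim
      case (elim t)
      show ?case
      proof (cases "t \<in> {0<..<1}")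
        case True
        then have "(\<integral>\<^sup>+ y. h t y \<partial>lborel) = ennreal (-ln (1-t))"
          unfolding h_def by (intro inner) auto
        moreover have "-ln (1-t) \<ge> 0" using True by auto
        ultimately show ?thesis using True
          by (simp add: c_def ennreal_power ennreal_mult'[symmetric] divide_inverse mult.commute)
      next
        case False
        then have "t \<notin> {0..1} \<or> t = 0" using elim by auto
        then show ?thesis using False by (auto simp: c_def)
      qed
    qed
  qed
  also have "\<dots> = ennreal (fact (m-1) * zeta (m-1+1))"
    using assms by (intro Tint) auto
  finally show ?thesis using assms by simp
qed

end
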